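(* Let $\{(\mathbf{x}^{(i)},y^{(i)})\}_{i=1}^n$ with $\|\mathbf{x}^{(i)}\|_2\le1$, $y^{(i)}\in\{-1,1\}$, and suppose there is $\mathbf{w}^*$ with $\|\mathbf{w}^*\|_2=1$ and $\min_iy^{(i)}\mathbf{x}^{(i)\top}\mathbf{w}^*=\gamma>0$. Let $A$ have rows $y^{(i)}\mathbf{x}^{(i)\top}$ and $R(\mathbf{v})=\frac1n\sum_{i=1}^n\exp(-y^{(i)}\mathbf{v}^{\top}\mathbf{x}^{(i)})$. (NAG.) $\mathbf{v}_0=\mathbf{s}_0=\mathbf{0}$; for $t=1,\dots,T$: $\mathbf{u}_t=\mathbf{s}_{t-1}+\frac{1}{2(t-1)}\mathbf{v}_{t-1}$ (with $\mathbf{u}_1=\mathbf{s}_0$), $\mathbf{v}_t=\mathbf{v}_{t-1}-\eta_t\nabla R(\mathbf{u}_t)$ with $\eta_t=\frac{t}{R(\mathbf{u}_t)}$, $\mathbf{s}_t=\mathbf{s}_{t-1}+\frac{1}{2(t+1)}\mathbf{v}_t$. (Game dynamics.) $\alpha_t=t$, $g(\mathbf{w},\mathbf{p})=\mathbf{p}^{\top}A\mathbf{w}-\frac12\|\mathbf{w}\|_2^2$, $\mathbf{w}_0=\mathbf{0}$, $h_j(\mathbf{w})=-g(\mathbf{w},\mathbf{p}_j)$, $\ell_j(\mathbf{p})=g(\mathbf{w}_j,\mathbf{p})$; for $t=1,\dots,T$, first $\mathbf{p}_t=\arg\min_{\mathbf{p}\in\Delta^n}\tfrac14\big[\sum_{s=1}^{t-1}\alpha_s\ell_s(\mathbf{p})+\alpha_t\ell_{t-1}(\mathbf{p})\big]+D_E(\mathbf{p},\tfrac{\mathbf{1}}{n})$,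 then $\mathbf{w}_t=\arg\min_{\mathbf{w}\in\mathbb{R}^d}\sum_{j=1}^t\alpha_jh_j(\mathbf{w})$; let $\overline{\mathbf{w}}_T=\frac{\sum_t\alpha_t\mathbf{w}_t}{\sum_t\alpha_t}$ and $\widetilde{\mathbf{w}}_T=\frac{\sum_{t=1}^T\alpha_t}{4}\overline{\mathbf{w}}_T$. Then $\mathbf{s}_T=\widetilde{\mathbf{w}}_T$, and $\frac{\min_{\mathbf{p}\in\Delta^n}\mathbf{p}^{\top}A\mathbf{s}_T}{\|\mathbf{s}_T\|_2}\ge\gamma-\frac{8\log n+2}{T(T+1)\gamma}$.
   Context: $\Delta^n$ is the probability simplex; $\mathbf{1}$ the all-ones vector; $D_E(\mathbf{p},\mathbf{q})=\sum_ip_i\log(p_i/q_i)$ (KL divergence). Note $\min_{\mathbf{p}\in\Delta^n}\mathbf{p}^{\top}A\mathbf{s}=\min_iy^{(i)}\mathbf{x}^{(i)\top}\mathbf{s}$. *)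

theory Defs
  imports "HOL-Analysis.Analysis"
begin

definition prob_simplex :: "(real^'n::finite) set" where
  "prob_simplex = {p. (\<forall>i. 0 \<le> p$i) \<and> (\<Sum>i\<in>UNIV. p$i) = 1}"

text \<open>KL divergence D_E(p,q) = sum_i p_i log(p_i/q_i) (terms with p_i = 0 vanish).\<close>
definition KL :: "real^'n::finite \<Rightarrow> real^'n \<Rightarrow> real" where
  "KL p q = (\<Sum>i\<in>UNIV. p$i * ln (p$i / q$i))"

definition risk :: "('n::finite \<Rightarrow> real^'d) \<Rightarrow> ('n \<Rightarrow> real) \<Rightarrow> real^'d \<Rightarrow> real" where
  "risk x y v = (1 / real CARD('n)) * (\<Sum>i\<in>UNIV. exp (- (y i * (v \<bullet> x i))))"

text \<open>p^T A w, where A has rows y_i x_i^T.\<close>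
definition pAw :: "('n::finite \<Rightarrow> real^'d) \<Rightarrow> ('n \<Rightarrow> real) \<Rightarrow> real^'n \<Rightarrow> real^'d \<Rightarrow> real" where
  "pAw x y p w = (\<Sum>i\<in>UNIV. p$i * (y i * (x i \<bullet> w)))"

definition gfun :: "('n::finite \<Rightarrow> real^'d) \<Rightarrow> ('n \<Rightarrow> real) \<Rightarrow> real^'d \<Rightarrow> real^'n \<Rightarrow> real" where
  "gfun x y w p = pAw x y p w - 1/2 * (norm w)^2"

end

theory Submission
  imports Defs "HOL-Probability.Hoeffding"
begin


lemma ln_strict: assumes "(0::real) < x" "x \<noteq> 1" shows "ln x < x - 1"
proof -
  have sx: "sqrt x > 0" using assms by simp
  have "sqrt x \<noteq> 1" using assms by auto
  hence "(sqrt x - 1)^2 > 0" by simp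
  hence lt: "2 * (sqrt x - 1) < x - 1" using assms by (simp add: power2_eq_square algebra_simps)
  have "ln x = 2 * ln (sqrt x)" using assms by (simp add: ln_sqrt)
  also have "\<dots> \<le> 2 * (sqrt x - 1)" using ln_le_minus_one[OF sx] by simp
  finally show ?thesis using lt by linarith
qed

lemma kl_term_nonneg: assumes "(0::real) \<le> a" "0 < b" shows "0 \<le> a * ln (a / b) - a + b"
proof (cases "a = 0")
  case True thus ?thesis using assms by simp
next
  case False
  hence a: "a > 0" using assms by simp
  have "ln (b / a) \<le> b / a - 1" using ln_le_minus_one a assms by simp
  moreover have "ln (a / b) = - ln (b / a)" using a assms by (simp add: ln_div)
  ultimately have "a * ln (a / b) \<ge> a * (1 - b / a)" using a
    by (metis minus_diff_eq mult_left_mono neg_le_iff_le less_imp_le)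
  moreover have "a * (1 - b / a) = a - b" using a by (simp add: field_simps)
  ultimately show ?thesis by linarith
qed

lemma kl_term_zero: assumes "(0::real) \<le> a" "0 < b" "a * ln (a / b) - a + b = 0" shows "a = b"
proof (rule ccontr)
  assume ne: "a \<noteq> b"
  have a: "a > 0" using assms by (cases "a = 0") auto
  have "ln (b / a) < b / a - 1" using ln_strict a assms ne by simp
  moreover have "ln (a / b) = - ln (b / a)" using a assms by (simp add: ln_div)
  ultimately have "a * ln (a / b) > a * (1 - b / a)" using a
    by (metis minus_diff_eq mult_strict_left_mono neg_less_iff_less)
  moreover have "a * (1 - b / a) = a - b" using a by (simp add: field_simps)
  ultimately show False using assms(3) by linarith
qed

lemma exp_chord:
  fixes c r :: real assumes r: "r > 0" and c: "\<bar>c\<bar> \<le> r"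
  shows "exp c \<le> (1 - (c + r) / (2*r)) * exp (- r) + ((c + r) / (2*r)) * exp r"
proof -
  define t where "t = (c + r) / (2*r)"
  have t0: "t \<ge> 0" "t \<le> 1" using r c by (auto simp: t_def field_simps)
  have "exp (1 * ((1 - t) *\<^sub>R (-r) + t *\<^sub>R r)) \<le> (1 - t) * exp (1 * (-r)) + t * exp (1 * r)"
    using convex_onD[OF convex_on_exp[of 1], of t "-r" r] t0 by simp
  moreover have "(1 - t) *\<^sub>R (-r) + t *\<^sub>R r = c" using r by (simp add: t_def field_simps)
  ultimately show ?thesis by (simp add: t_def)
qed

lemma fin_hoeff:
  fixes \<pi> c :: "'a \<Rightarrow> real"
  assumes fin: "finite A" and pos: "\<forall>i\<in>A. \<pi> i \<ge> 0" and s1: "sum \<pi> A = 1"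
    and bd: "\<forall>i\<in>A. \<bar>c i\<bar> \<le> r"
  shows "ln (\<Sum>i\<in>A. \<pi> i * exp (c i)) \<le> (\<Sum>i\<in>A. \<pi> i * c i) + r^2 / 2"
proof (cases "r = 0")
  case True
  hence "\<forall>i\<in>A. c i = 0" using bd by auto
  thus ?thesis using s1 by simp
next
  case False
  have "A \<noteq> {}" using s1 by auto
  then obtain i0 where "i0 \<in> A" by blast
  hence "r \<ge> 0" using bd abs_ge_zero order_trans by blast
  hence r: "r > 0" using False by simp
  define \<mu> where "\<mu> = (\<Sum>i\<in>A. \<pi> i * c i)"
  define P where "P = (\<mu> + r) / (2*r)"
  have "\<mu> \<ge> (\<Sum>i\<in>A. \<pi> i * (-r))" unfolding \<mu>_def
    using pos bd by (intro sum_mono mult_left_mono) auto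
  moreover have "(\<Sum>i\<in>A. \<pi> i * (-r)) = -r" unfolding sum_distrib_right[symmetric] s1 by simp
  ultimately have mu: "\<mu> \<ge> -r" by simp
  have P0: "P \<ge> 0" using mu r by (simp add: P_def)
  define E where "E = exp (-r)"
  define F where "F = exp r"
  have "(\<Sum>i\<in>A. \<pi> i * exp (c i)) \<le> (\<Sum>i\<in>A. \<pi> i * ((1 - (c i + r) / (2*r)) * E + ((c i + r) / (2*r)) * F))"
    unfolding E_def F_def using pos bd exp_chord[OF r] by (intro sum_mono mult_left_mono) auto
  also have "\<dots> = (\<Sum>i\<in>A. \<pi> i * E + (\<pi> i * c i) * ((F - E) / (2*r)) + \<pi> i * (r * (F - E) / (2*r)))"
    using r by (intro sum.cong refl) (simp add: field_simps)
  also have "\<dots> = (\<Sum>i\<in>A. \<pi> i) * E + (\<Sum>i\<in>A. \<pi> i * c i) * ((F - E) / (2*r)) + (\<Sum>i\<in>A. \<pi> i) * (r * (F - E) / (2*r))"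
    by (simp only: sum.distrib sum_distrib_right)
  also have "\<dots> = E + \<mu> * ((F - E) / (2*r)) + r * (F - E) / (2*r)"
    using s1 by (simp add: \<mu>_def)
  also have "\<dots> = E * (1 + P * (F / E - 1))"
    using r by (simp add: P_def E_def field_simps)
  also have "F / E = exp (2*r)" by (simp add: E_def F_def exp_minus_inverse field_simps flip: exp_add)
  also have "E = exp (-r)" by (simp add: E_def)
  finally have le: "(\<Sum>i\<in>A. \<pi> i * exp (c i)) \<le> exp (-r) * (1 + P * (exp (2*r) - 1))" .
  have spos: "(\<Sum>i\<in>A. \<pi> i * exp (c i)) > 0"
  proof -
    obtain j where "j \<in> A" "\<pi> j > 0" using s1 pos
      by (metis (no_types, lifting) less_eq_real_def sum_nonpos zero_less_one not_le)
    hence "\<pi> j * exp (c j) > 0" by simp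
    moreover have "\<pi> j * exp (c j) \<le> (\<Sum>i\<in>A. \<pi> i * exp (c i))"
      using \<open>j \<in> A\<close> fin pos by (intro member_le_sum) auto
    ultimately show ?thesis by linarith
  qed
  have q: "1 + P * (exp (2*r) - 1) > 0" using P0 r by (simp add: add_pos_nonneg)
  have "ln (\<Sum>i\<in>A. \<pi> i * exp (c i)) \<le> ln (exp (-r) * (1 + P * (exp (2*r) - 1)))"
    using le spos by simp
  also have "\<dots> = -r + ln (1 + P * (exp (2*r) - 1))" using q by (simp add: ln_mult)
  also have "\<dots> \<le> -r + (2*r) * P + (2*r)^2/8"
    using Hoeffdings_lemma_aux[of "2*r" P] r P0 by simp
  also have "\<dots> = \<mu> + r^2/2" using r by (simp add: P_def power2_eq_square field_simps)
  finally show ?thesis by (simp add: \<mu>_def)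
qed

lemma fin_jensen:
  fixes \<pi> c :: "'a \<Rightarrow> real"
  assumes fin: "finite A" and pos: "\<forall>i\<in>A. \<pi> i \<ge> 0" and s1: "sum \<pi> A = 1"
  shows "ln (\<Sum>i\<in>A. \<pi> i * exp (c i)) \<ge> (\<Sum>i\<in>A. \<pi> i * c i)"
proof -
  define \<mu> where "\<mu> = (\<Sum>i\<in>A. \<pi> i * c i)"
  have h: "\<pi> i * (exp \<mu> * (1 + (c i - \<mu>))) \<le> \<pi> i * exp (c i)" if "i \<in> A" for i
  proof -
    have "exp \<mu> * (1 + (c i - \<mu>)) \<le> exp \<mu> * exp (c i - \<mu>)"
    proof (rule mult_left_mono)
      show "1 + (c i - \<mu>) \<le> exp (c i - \<mu>)" by (rule exp_ge_add_one_self)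
    qed simp
    also have "exp \<mu> * exp (c i - \<mu>) = exp (c i)" by (simp add: mult_exp_exp)
    finally have "exp \<mu> * (1 + (c i - \<mu>)) \<le> exp (c i)" .
    moreover have "\<pi> i \<ge> 0" using pos that by blast
    ultimately show ?thesis by (rule mult_left_mono)
  qed
  have "(\<Sum>i\<in>A. \<pi> i * (exp \<mu> * (1 + (c i - \<mu>)))) \<le> (\<Sum>i\<in>A. \<pi> i * exp (c i))"
    using h by (rule sum_mono)
  moreover have "(\<Sum>i\<in>A. \<pi> i * (exp \<mu> * (1 + (c i - \<mu>)))) = exp \<mu> * ((\<Sum>i\<in>A. \<pi> i) + (\<Sum>i\<in>A. \<pi> i * c i) - \<mu> * (\<Sum>i\<in>A. \<pi> i))"
  proof -
    have "(\<Sum>i\<in>A. \<pi> i * (exp \<mu> * (1 + (c i - \<mu>)))) = (\<Sum>i\<in>A. exp \<mu> * \<pi> i + exp \<mu> * (\<pi> i * c i) - (exp \<mu> * \<mu>) * \<pi> i)"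
      by (rule sum.cong) (simp_all add: algebra_simps)
    also have "\<dots> = exp \<mu> * (\<Sum>i\<in>A. \<pi> i) + exp \<mu> * (\<Sum>i\<in>A. \<pi> i * c i) - (exp \<mu> * \<mu>) * (\<Sum>i\<in>A. \<pi> i)"
      by (simp only: sum.distrib sum_subtractf sum_distrib_left)
    finally show ?thesis by (simp only: distrib_left right_diff_distrib mult.assoc)
  qed
  moreover have "exp \<mu> * ((\<Sum>i\<in>A. \<pi> i) + (\<Sum>i\<in>A. \<pi> i * c i) - \<mu> * (\<Sum>i\<in>A. \<pi> i)) = exp \<mu>"
    unfolding s1 \<mu>_def[symmetric] by simp
  ultimately have le: "exp \<mu> \<le> (\<Sum>i\<in>A. \<pi> i * exp (c i))" by simp
  have pos2: "exp \<mu> > 0" by simp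
  have "ln (exp \<mu>) \<le> ln (\<Sum>i\<in>A. \<pi> i * exp (c i))" by (rule ln_mono[OF le pos2])
  thus ?thesis unfolding \<mu>_def by simp
qed



definition aT :: "('n::finite \<Rightarrow> real^'d) \<Rightarrow> ('n \<Rightarrow> real) \<Rightarrow> real^'n \<Rightarrow> real^'d" where
  "aT x y q = (\<Sum>i\<in>UNIV. (q$i * y i) *\<^sub>R x i)"
definition Zf :: "('n::finite \<Rightarrow> real^'d) \<Rightarrow> ('n \<Rightarrow> real) \<Rightarrow> real^'d \<Rightarrow> real" where
  "Zf x y z = (\<Sum>i\<in>UNIV. exp (-(y i * (x i \<bullet> z))))"
definition LL :: "('n::finite \<Rightarrow> real^'d) \<Rightarrow> ('n \<Rightarrow> real) \<Rightarrow> real^'d \<Rightarrow> real" where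
  "LL x y z = ln (Zf x y z)"
definition piv :: "('n::finite \<Rightarrow> real^'d) \<Rightarrow> ('n \<Rightarrow> real) \<Rightarrow> real^'d \<Rightarrow> real^'n" where
  "piv x y z = (\<chi> i. exp (-(y i * (x i \<bullet> z))) / Zf x y z)"

lemma pAw_aT: "pAw x y q z = aT x y q \<bullet> z"
  unfolding pAw_def aT_def by (simp add: inner_sum_left mult.assoc)

lemma Zf_pos: "Zf x y z > 0"
  unfolding Zf_def by (rule sum_pos) auto

lemma piv_simplex: "piv x y z \<in> prob_simplex"
proof -
  have "(\<Sum>i\<in>UNIV. exp (-(y i * (x i \<bullet> z))) / Zf x y z) = Zf x y z / Zf x y z"
    unfolding sum_divide_distrib[symmetric] Zf_def ..
  thus ?thesis using Zf_pos[of x y z] unfolding prob_simplex_def piv_def by auto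
qed

lemma sum_piv: "(\<Sum>i\<in>UNIV. piv x y z $ i) = 1"
  using piv_simplex[of x y z] unfolding prob_simplex_def by auto

lemma LL_decomp:
  "LL x y (z + d) = LL x y z + ln (\<Sum>i\<in>UNIV. piv x y z $ i * exp (-(y i * (x i \<bullet> d))))"
proof -
  have e: "exp (-(y i * (x i \<bullet> (z + d)))) = exp (-(y i * (x i \<bullet> z))) * exp (-(y i * (x i \<bullet> d)))" for i
  proof -
    have "-(y i * (x i \<bullet> (z + d))) = (-(y i * (x i \<bullet> z))) + (-(y i * (x i \<bullet> d)))"
      by (simp add: inner_add_right distrib_left)
    thus ?thesis by (simp only: exp_add)
  qed
  have Zp: "Zf x y z > 0" by (rule Zf_pos)
  have r: "Zf x y z * (\<Sum>i\<in>UNIV. piv x y z $ i * exp (-(y i * (x i \<bullet> d))))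
      = (\<Sum>i\<in>UNIV. exp (-(y i * (x i \<bullet> z))) * exp (-(y i * (x i \<bullet> d))))"
    unfolding sum_distrib_left piv_def using Zp by (intro sum.cong) auto
  have "Zf x y (z + d) = Zf x y z * (\<Sum>i\<in>UNIV. piv x y z $ i * exp (-(y i * (x i \<bullet> d))))"
    unfolding r unfolding Zf_def e ..
  moreover have "(\<Sum>i\<in>UNIV. piv x y z $ i * exp (-(y i * (x i \<bullet> d)))) > 0"
    using Zp unfolding piv_def by (intro sum_pos) auto
  ultimately show ?thesis using Zp unfolding LL_def by (simp add: ln_mult)
qed

lemma sum_piv_lin: "(\<Sum>i\<in>UNIV. piv x y z $ i * (-(y i * (x i \<bullet> d)))) = - (aT x y (piv x y z) \<bullet> d)"
  unfolding aT_def by (simp add: inner_sum_left sum_negf[symmetric] mult.assoc)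

lemma c_bound:
  assumes "\<forall>i. norm (x i) \<le> 1" "\<forall>i. y i \<in> {-1, 1}"
  shows "\<bar>-(y i * (x i \<bullet> d))\<bar> \<le> norm d"
proof -
  have "\<bar>x i \<bullet> d\<bar> \<le> norm (x i) * norm d" by (rule Cauchy_Schwarz_ineq2)
  also have "\<dots> \<le> norm d" using assms(1) by (simp add: mult_left_le_one_le)
  moreover have "y i = -1 \<or> y i = 1" using assms(2) by auto
  hence "\<bar>y i\<bar> = 1" by auto
  ultimately show ?thesis by (simp add: abs_mult)
qed

lemma LL_upper:
  assumes "\<forall>i. norm (x i) \<le> 1" "\<forall>i. y i \<in> {-1, 1}"
  shows "LL x y (z + d) \<le> LL x y z - aT x y (piv x y z) \<bullet> d + (norm d)^2 / 2"
proof -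
  have "ln (\<Sum>i\<in>UNIV. piv x y z $ i * exp (-(y i * (x i \<bullet> d))))
        \<le> (\<Sum>i\<in>UNIV. piv x y z $ i * (-(y i * (x i \<bullet> d)))) + (norm d)^2/2"
    using piv_simplex[of x y z] c_bound[OF assms] unfolding prob_simplex_def
    by (intro fin_hoeff) auto
  thus ?thesis using LL_decomp[of x y z d] sum_piv_lin[of x y z d] by simp
qed

lemma LL_lower:
  shows "LL x y (z + d) \<ge> LL x y z - aT x y (piv x y z) \<bullet> d"
proof -
  have "ln (\<Sum>i\<in>UNIV. piv x y z $ i * exp (-(y i * (x i \<bullet> d))))
        \<ge> (\<Sum>i\<in>UNIV. piv x y z $ i * (-(y i * (x i \<bullet> d))))"
    using piv_simplex[of x y z] unfolding prob_simplex_def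
    by (intro fin_jensen) auto
  thus ?thesis using LL_decomp[of x y z d] sum_piv_lin[of x y z d] by simp
qed

lemma margin_LL: "y i * (x i \<bullet> z) \<ge> - LL x y z"
proof -
  have "exp (-(y i * (x i \<bullet> z))) \<le> Zf x y z"
    unfolding Zf_def by (rule member_le_sum) auto
  hence "ln (exp (-(y i * (x i \<bullet> z)))) \<le> LL x y z" unfolding LL_def
    by (rule ln_mono) simp
  thus ?thesis by simp
qed

lemma LL0: "LL x y 0 = ln (real CARD('n))" for x :: "'n::finite \<Rightarrow> real^'d"
  unfolding LL_def Zf_def by simp



lemma risk_deriv:
  "(risk x y has_derivative (\<lambda>h. h \<bullet> (- (1 / real CARD('n)) *\<^sub>R (\<Sum>i\<in>UNIV. (exp (-(y i * (u \<bullet> x i))) * y i) *\<^sub>R x i)))) (at u)"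
  for x :: "'n::finite \<Rightarrow> real^'d"
proof -
  have "((\<lambda>v. (1 / real CARD('n)) * (\<Sum>i\<in>UNIV. exp (- (y i * (v \<bullet> x i))))) has_derivative
        (\<lambda>h. (\<Sum>i\<in>UNIV. - (y i * (h \<bullet> x i) * exp (- (y i * (u \<bullet> x i))))) / real CARD('n))) (at u)"
    by (auto intro!: derivative_eq_intros)
  moreover have "(\<lambda>h. (\<Sum>i\<in>UNIV. - (y i * (h \<bullet> x i) * exp (- (y i * (u \<bullet> x i))))) / real CARD('n))
     = (\<lambda>h. h \<bullet> (- (1 / real CARD('n)) *\<^sub>R (\<Sum>i\<in>UNIV. (exp (-(y i * (u \<bullet> x i))) * y i) *\<^sub>R x i)))"
    by (auto simp: inner_sum_right sum_distrib_left sum_negf[symmetric] sum_divide_distrib algebra_simps intro!: sum.cong)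
  ultimately show ?thesis unfolding risk_def[abs_def] by simp
qed

lemma inner_fun_eq:
  fixes a b :: "'a::real_inner"
  assumes "(\<lambda>h. h \<bullet> a) = (\<lambda>h. h \<bullet> b)" shows "a = b"
proof -
  have "(a - b) \<bullet> a = (a - b) \<bullet> b" using fun_cong[OF assms, of "a - b"] by simp
  hence "(a - b) \<bullet> (a - b) = 0" by (simp add: inner_diff_right)
  thus ?thesis by simp
qed

lemma grad_unique:
  fixes x :: "'n::finite \<Rightarrow> real^'d"
  assumes "GDERIV (risk x y) u :> G"
  shows "G = - (1 / real CARD('n)) *\<^sub>R (\<Sum>i\<in>UNIV. (exp (-(y i * (u \<bullet> x i))) * y i) *\<^sub>R x i)"
    (is "G = ?G0")
proof -
  have "(\<lambda>h. h \<bullet> G) = (\<lambda>h. h \<bullet> ?G0)"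
    using has_derivative_unique[OF assms[unfolded gderiv_def] risk_deriv] by simp
  thus ?thesis by (rule inner_fun_eq)
qed



lemma grad_step:
  fixes x :: "'n::finite \<Rightarrow> real^'d"
  assumes "GDERIV (risk x y) u :> G"
  shows "v - (c / risk x y u) *\<^sub>R G = v + c *\<^sub>R aT x y (piv x y u)"
proof -
  define S where "S = (\<Sum>i\<in>UNIV. (exp (-(y i * (x i \<bullet> u))) * y i) *\<^sub>R x i)"
  have G: "G = - (1 / real CARD('n)) *\<^sub>R S" using grad_unique[OF assms] by (simp add: S_def inner_commute)
  have R: "risk x y u = Zf x y u / real CARD('n)" unfolding risk_def Zf_def by (simp add: inner_commute)
  have A: "aT x y (piv x y u) = (1 / Zf x y u) *\<^sub>R S"
    unfolding aT_def piv_def S_def by (simp add: scaleR_sum_right)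
  have Zp: "Zf x y u > 0" by (rule Zf_pos)
  show ?thesis unfolding G R A using Zp by (simp add: field_simps)
qed

lemma KL_expand:
  fixes q :: "real^'n::finite" and x :: "'n \<Rightarrow> real^'d"
  assumes "q \<in> prob_simplex"
  shows "pAw x y q z + KL q (\<chi> i. 1 / real CARD('n)) = KL q (piv x y z) + ln (real CARD('n)) - LL x y z"
proof -
  have Zp: "Zf x y z > 0" by (rule Zf_pos)
  have n: "real CARD('n) > 0" by simp
  have q0: "\<forall>i. q $ i \<ge> 0" and q1: "(\<Sum>i\<in>UNIV. q $ i) = 1" using assms unfolding prob_simplex_def by auto
  have trm: "q $ i * (y i * (x i \<bullet> z)) + q $ i * ln (q $ i / (1 / real CARD('n)))
     = q $ i * ln (q $ i / piv x y z $ i) + q $ i * (ln (real CARD('n)) - LL x y z)" for i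
  proof (cases "q $ i = 0")
    case True thus ?thesis by simp
  next
    case False
    hence qp: "q $ i > 0" using q0 by (simp add: less_le)
    have "ln (q $ i / (1 / real CARD('n))) = ln (q $ i) + ln (real CARD('n))"
      using qp n by (simp add: ln_mult)
    moreover have "ln (q $ i / piv x y z $ i) = ln (q $ i) + y i * (x i \<bullet> z) + LL x y z"
      using qp Zp unfolding piv_def LL_def by (simp add: ln_div ln_mult)
    ultimately show ?thesis by (simp add: algebra_simps)
  qed
  have "pAw x y q z + KL q (\<chi> i. 1 / real CARD('n))
       = (\<Sum>i\<in>UNIV. q $ i * (y i * (x i \<bullet> z)) + q $ i * ln (q $ i / (1 / real CARD('n))))"
    unfolding pAw_def KL_def by (simp add: sum.distrib)
  also have "\<dots> = (\<Sum>i\<in>UNIV. q $ i * ln (q $ i / piv x y z $ i) + q $ i * (ln (real CARD('n)) - LL x y z))"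
    using trm by simp
  also have "\<dots> = KL q (piv x y z) + (\<Sum>i\<in>UNIV. q $ i) * (ln (real CARD('n)) - LL x y z)"
    unfolding KL_def by (simp add: sum.distrib sum_distrib_right)
  finally show ?thesis using q1 by simp
qed

lemma KL_self: "KL p p = 0"
  unfolding KL_def by (auto intro!: sum.neutral)

lemma gibbs:
  fixes x :: "'n::finite \<Rightarrow> real^'d" and p :: "real^'n"
  assumes am: "is_arg_min f (\<lambda>q. q \<in> prob_simplex) p"
    and fq: "\<forall>q. f q = pAw x y q z + C + KL q (\<chi> i. 1 / real CARD('n))"
  shows "p = piv x y z"
proof -
  define \<pi> where "\<pi> = piv x y z"
  have ps: "p \<in> prob_simplex" using am unfolding is_arg_min_def by simp
  have "f p \<le> f \<pi>" using am piv_simplex[of x y z] unfolding is_arg_min_def \<pi>_def by (metis not_le)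
  hence "KL p \<pi> \<le> KL \<pi> \<pi>"
    using fq KL_expand[OF ps, of x y z] KL_expand[OF piv_simplex[of x y z], of x y z]
    unfolding \<pi>_def by (simp add: algebra_simps)
  hence le: "KL p \<pi> \<le> 0" by (simp add: KL_self)
  have p0: "\<forall>i. p $ i \<ge> 0" and p1: "(\<Sum>i\<in>UNIV. p $ i) = 1" using ps unfolding prob_simplex_def by auto
  have pipos: "\<forall>i. \<pi> $ i > 0" unfolding \<pi>_def piv_def using Zf_pos[of x y z] by simp
  have pi1: "(\<Sum>i\<in>UNIV. \<pi> $ i) = 1" unfolding \<pi>_def by (rule sum_piv)
  have eq: "KL p \<pi> = (\<Sum>i\<in>UNIV. p $ i * ln (p $ i / \<pi> $ i) - p $ i + \<pi> $ i)"
    unfolding KL_def using p1 pi1 by (simp add: sum.distrib sum_subtractf)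
  have nn: "\<And>i. i \<in> UNIV \<Longrightarrow> 0 \<le> p $ i * ln (p $ i / \<pi> $ i) - p $ i + \<pi> $ i"
    using kl_term_nonneg p0 pipos by blast+
  have "(\<Sum>i\<in>UNIV. p $ i * ln (p $ i / \<pi> $ i) - p $ i + \<pi> $ i) = 0"
  proof -
    have "0 \<le> (\<Sum>i\<in>UNIV. p $ i * ln (p $ i / \<pi> $ i) - p $ i + \<pi> $ i)"
      by (rule sum_nonneg) (rule nn)
    thus ?thesis using le eq by linarith
  qed
  hence "\<forall>i\<in>UNIV. p $ i * ln (p $ i / \<pi> $ i) - p $ i + \<pi> $ i = 0"
    using sum_nonneg_eq_0_iff[OF finite, of UNIV "\<lambda>i. p $ i * ln (p $ i / \<pi> $ i) - p $ i + \<pi> $ i"] nn by blast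
  hence "\<forall>i. p $ i = \<pi> $ i" using kl_term_zero p0 pipos by blast
  thus ?thesis unfolding \<pi>_def by (simp add: vec_eq_iff)
qed

lemma wmin:
  fixes x :: "'n::finite \<Rightarrow> real^'d" and p :: "nat \<Rightarrow> real^'n"
  assumes am: "is_arg_min (\<lambda>z. \<Sum>j=1..t. real j * (- gfun x y z (p j))) (\<lambda>z. True) wt" and t: "t \<ge> 1"
  shows "wt = (1 / (\<Sum>j=1..t. real j)) *\<^sub>R (\<Sum>j=1..t. real j *\<^sub>R aT x y (p j))"
proof -
  define S where "S = (\<Sum>j=1..t. real j)"
  define V where "V = (\<Sum>j=1..t. real j *\<^sub>R aT x y (p j))"
  define c where "c = (1 / S) *\<^sub>R V"
  have Spos: "S > 0" unfolding S_def using t by (intro sum_pos2[of _ t]) auto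
  have f: "(\<Sum>j=1..t. real j * (- gfun x y z (p j))) = S / 2 * (norm z)^2 - V \<bullet> z" for z
  proof -
    have "(\<Sum>j=1..t. real j * (- gfun x y z (p j))) = (\<Sum>j=1..t. ((norm z)^2 / 2) * real j - (real j *\<^sub>R aT x y (p j)) \<bullet> z)"
      by (rule sum.cong) (simp_all add: gfun_def pAw_aT algebra_simps)
    also have "\<dots> = ((norm z)^2 / 2) * S - V \<bullet> z"
      unfolding S_def V_def by (simp add: sum_subtractf sum_distrib_left inner_sum_left)
    finally show ?thesis by simp
  qed
  have V: "V = S *\<^sub>R c" unfolding c_def using Spos by simp
  have diff: "S / 2 * (norm z)^2 - V \<bullet> z - (S / 2 * (norm c)^2 - V \<bullet> c) = S / 2 * (norm (z - c))^2" for z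
    unfolding V by (simp add: power2_norm_eq_inner inner_diff_left inner_diff_right algebra_simps inner_commute)
  have "S / 2 * (norm wt)^2 - V \<bullet> wt \<le> S / 2 * (norm c)^2 - V \<bullet> c"
    using am unfolding is_arg_min_def f by (metis not_le)
  hence "S / 2 * (norm (wt - c))^2 \<le> 0" using diff[of wt] by linarith
  hence "norm (wt - c) = 0" using Spos by (simp add: mult_le_0_iff)
  thus ?thesis unfolding c_def S_def V_def by simp
qed



lemma Ssum: "(\<Sum>j=1..t. real j) = real t * (real t + 1) / 2"
  by (induction t) (simp_all add: field_simps)

lemma aT_norm:
  fixes x :: "'n::finite \<Rightarrow> real^'d"
  assumes q: "q \<in> prob_simplex" and xn: "\<forall>i. norm (x i) \<le> 1" and ys: "\<forall>i. y i \<in> {-1, 1}"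
  shows "norm (aT x y q) \<le> 1"
proof -
  have q0: "\<forall>i. q $ i \<ge> 0" and q1: "(\<Sum>i\<in>UNIV. q $ i) = 1" using q unfolding prob_simplex_def by auto
  have "norm (aT x y q) \<le> (\<Sum>i\<in>UNIV. norm ((q $ i * y i) *\<^sub>R x i))"
    unfolding aT_def by (rule norm_sum)
  also have "\<dots> \<le> (\<Sum>i\<in>UNIV. q $ i)"
  proof (rule sum_mono)
    fix i :: 'n
    have "y i = -1 \<or> y i = 1" using ys by auto
    hence "\<bar>y i\<bar> = 1" by auto
    hence "norm ((q $ i * y i) *\<^sub>R x i) = q $ i * norm (x i)" using q0 by (simp add: abs_mult)
    also have "\<dots> \<le> q $ i * 1" using q0 xn by (intro mult_left_mono) auto
    finally show "norm ((q $ i * y i) *\<^sub>R x i) \<le> q $ i" by simp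
  qed
  finally show ?thesis using q1 by simp
qed

lemma aT_wstar:
  fixes x :: "'n::finite \<Rightarrow> real^'d"
  assumes q: "q \<in> prob_simplex" and g: "\<forall>i. \<gamma> \<le> y i * (x i \<bullet> ws)"
  shows "\<gamma> \<le> ws \<bullet> aT x y q"
proof -
  have q0: "\<forall>i. q $ i \<ge> 0" and q1: "(\<Sum>i\<in>UNIV. q $ i) = 1" using q unfolding prob_simplex_def by auto
  have "(\<Sum>i\<in>UNIV. q $ i * \<gamma>) \<le> (\<Sum>i\<in>UNIV. q $ i * (y i * (x i \<bullet> ws)))"
    using q0 g by (intro sum_mono mult_left_mono) auto
  moreover have "(\<Sum>i\<in>UNIV. q $ i * \<gamma>) = \<gamma>" using q1 by (simp add: sum_distrib_right[symmetric])
  moreover have "ws \<bullet> aT x y q = (\<Sum>i\<in>UNIV. q $ i * (y i * (x i \<bullet> ws)))"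
    unfolding aT_def by (simp add: inner_sum_right inner_commute mult.assoc)
  ultimately show ?thesis by simp
qed

lemma pAw_ge_LL:
  fixes x :: "'n::finite \<Rightarrow> real^'d"
  assumes q: "q \<in> prob_simplex"
  shows "pAw x y q z \<ge> - LL x y z"
proof -
  have q0: "\<forall>i. q $ i \<ge> 0" and q1: "(\<Sum>i\<in>UNIV. q $ i) = 1" using q unfolding prob_simplex_def by auto
  have "(\<Sum>i\<in>UNIV. q $ i * (- LL x y z)) \<le> (\<Sum>i\<in>UNIV. q $ i * (y i * (x i \<bullet> z)))"
    using q0 margin_LL by (intro sum_mono mult_left_mono) auto
  moreover have "(\<Sum>i\<in>UNIV. q $ i * (- LL x y z)) = - LL x y z" unfolding sum_distrib_right[symmetric] q1 by simp
  ultimately show ?thesis unfolding pAw_def by simp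
qed

lemma pot_step:
  fixes a wt wp :: "real^'d" and t St Sp Ls Ls' Lu :: real
  assumes St: "St = t * (t + 1) / 2" and Sp: "Sp = (t - 1) * t / 2"
    and inc: "t *\<^sub>R a = St *\<^sub>R wt - Sp *\<^sub>R wp"
    and up: "Ls \<le> Lu - a \<bullet> ((t / 4) *\<^sub>R (wt - wp)) + (norm ((t / 4) *\<^sub>R (wt - wp)))^2 / 2"
    and lo: "Ls' \<ge> Lu - a \<bullet> (- (t / 4) *\<^sub>R wp)"
  shows "Ls + St * (norm wt)^2 / 8 + t * (norm wt)^2 / 8
         \<le> Ls' + Sp * (norm wp)^2 / 8 + t * (2 - t) / 32 * (norm (wt - wp))^2"
proof -
  define A where "A = wt \<bullet> wt"
  define B where "B = wp \<bullet> wt"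
  define Cc where "Cc = wp \<bullet> wp"
  have e1: "t * (a \<bullet> wt) = St * A - Sp * B"
  proof -
    have "(t *\<^sub>R a) \<bullet> wt = (St *\<^sub>R wt - Sp *\<^sub>R wp) \<bullet> wt" using inc by simp
    thus ?thesis by (simp add: A_def B_def inner_diff_left)
  qed
  have e2: "a \<bullet> ((t / 4) *\<^sub>R (wt - wp)) = (t / 4) * (a \<bullet> wt) - (t / 4) * (a \<bullet> wp)"
    by (simp add: inner_diff_right algebra_simps)
  have e3: "a \<bullet> (- (t / 4) *\<^sub>R wp) = - (t / 4) * (a \<bullet> wp)" by simp
  have N: "(norm (wt - wp))^2 = A - 2 * B + Cc"
    by (simp add: power2_norm_eq_inner A_def B_def Cc_def inner_diff_left inner_diff_right inner_commute)
  have e4: "(norm ((t / 4) *\<^sub>R (wt - wp)))^2 = t^2 / 16 * (A - 2 * B + Cc)"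
    using N by (simp add: power_mult_distrib power_divide)
  have nA: "(norm wt)^2 = A" and nC: "(norm wp)^2 = Cc" by (simp_all add: power2_norm_eq_inner A_def Cc_def)
  have key: "Ls \<le> Ls' - (St * A - Sp * B) / 4 + t^2 / 32 * (A - 2 * B + Cc)"
  proof -
    have "Ls \<le> Ls' - (t / 4) * (a \<bullet> wt) + t^2 / 32 * (A - 2 * B + Cc)"
      using up lo e2 e3 e4 by linarith
    moreover have "(t / 4) * (a \<bullet> wt) = (St * A - Sp * B) / 4" using e1 by simp
    ultimately show ?thesis by simp
  qed
  have poly: "- (St * A - Sp * B) / 4 + t^2 / 32 * (A - 2 * B + Cc) + St * A / 8 + t * A / 8
       - Sp * Cc / 8 - t * (2 - t) / 32 * (A - 2 * B + Cc) = 0"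
    unfolding St Sp by (simp add: field_simps power2_eq_square)
  show ?thesis unfolding nA nC N using key poly by linarith
qed



theorem theorem6:
  fixes x :: "'n::finite \<Rightarrow> real^'d" and y :: "'n \<Rightarrow> real"
    and wstar :: "real^'d" and \<gamma> :: real and T :: nat
    and v s u G :: "nat \<Rightarrow> real^'d"
    and p :: "nat \<Rightarrow> real^'n" and w :: "nat \<Rightarrow> real^'d"
  assumes x_norm: "\<forall>i. norm (x i) \<le> 1"
    and y_sign: "\<forall>i. y i \<in> {-1, 1}"
    and wstar_norm: "norm wstar = 1"
    and gamma_def: "\<gamma> = Min (range (\<lambda>i. y i * (x i \<bullet> wstar)))"
    and gamma_pos: "\<gamma> > 0"
    and T_pos: "T \<ge> 1"
    and v0: "v 0 = 0" and s0: "s 0 = 0"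
    and u1: "u 1 = s 0"
    and u_step: "\<forall>t. 2 \<le> t \<and> t \<le> T \<longrightarrow> u t = s (t - 1) + (1 / (2 * real (t - 1))) *\<^sub>R v (t - 1)"
    and G_grad: "\<forall>t. 1 \<le> t \<and> t \<le> T \<longrightarrow> GDERIV (risk x y) (u t) :> G t"
    and v_step: "\<forall>t. 1 \<le> t \<and> t \<le> T \<longrightarrow> v t = v (t - 1) - (real t / risk x y (u t)) *\<^sub>R G t"
    and s_step: "\<forall>t. 1 \<le> t \<and> t \<le> T \<longrightarrow> s t = s (t - 1) + (1 / (2 * real (t + 1))) *\<^sub>R v t"
    and w0: "w 0 = 0"
    and p_step: "\<forall>t. 1 \<le> t \<and> t \<le> T \<longrightarrow>
      is_arg_min (\<lambda>q. 1/4 * ((\<Sum>j=1..t-1. real j * gfun x y (w j) q) + real t * gfun x y (w (t - 1)) q)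
                      + KL q (\<chi> i. 1 / real CARD('n)))
                 (\<lambda>q. q \<in> prob_simplex) (p t)"
    and w_step: "\<forall>t. 1 \<le> t \<and> t \<le> T \<longrightarrow>
      is_arg_min (\<lambda>z. \<Sum>j=1..t. real j * (- gfun x y z (p j))) (\<lambda>z. True) (w t)"
  shows "s T = ((\<Sum>t=1..T. real t) / 4) *\<^sub>R
               (inverse (\<Sum>t=1..T. real t) *\<^sub>R (\<Sum>t=1..T. real t *\<^sub>R w t))
       \<and> (INF q\<in>prob_simplex. pAw x y q (s T)) / norm (s T)
           \<ge> \<gamma> - (8 * ln (real CARD('n)) + 2) / (real T * (real T + 1) * \<gamma>)"
proof -
  let ?n = "real CARD('n)"
  define S where "S = (\<lambda>t::nat. \<Sum>j=1..t. real j)"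
  define V where "V = (\<lambda>t::nat. \<Sum>j=1..t. real j *\<^sub>R aT x y (p j))"
  have Sf: "S t = real t * (real t + 1) / 2" for t unfolding S_def by (rule Ssum)
  have S0: "S 0 = 0" by (simp add: Sf)
  have Spos: "S t > 0" if "t \<ge> 1" for t using that by (simp add: Sf)
  have V0: "V 0 = 0" unfolding V_def by simp
  have VSuc: "V (Suc k) = V k + real (Suc k) *\<^sub>R aT x y (p (Suc k))" for k
    unfolding V_def by simp
  have SSuc: "S (Suc k) = S k + real (Suc k)" for k unfolding S_def by simp
  have psimp: "p t \<in> prob_simplex" if "1 \<le> t" "t \<le> T" for t
    using p_step that unfolding is_arg_min_def by blast
  have W: "w t = (1 / S t) *\<^sub>R V t" if "1 \<le> t" "t \<le> T" for t
  proof -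
    have "is_arg_min (\<lambda>z. \<Sum>j=1..t. real j * (- gfun x y z (p j))) (\<lambda>z. True) (w t)"
      using w_step that by blast
    from wmin[OF this that(1)] show ?thesis unfolding S_def V_def .
  qed
  have WS: "S t *\<^sub>R w t = V t" if "t \<le> T" for t
  proof (cases "t = 0")
    case True thus ?thesis using S0 V0 w0 by simp
  next
    case False thus ?thesis using W[of t] that Spos[of t] by simp
  qed
  define Q where "Q = (\<lambda>k. v k = V k \<and> s k = (1/4) *\<^sub>R (\<Sum>j=1..k. real j *\<^sub>R w j))"
  have step: "u (Suc k) = s k + (real (Suc k) / 4) *\<^sub>R w k \<and> p (Suc k) = piv x y (u (Suc k)) \<and> Q (Suc k)"
    if kT: "Suc k \<le> T" and Qk: "Q k" for k
  proof -
    have vk: "v k = V k" and sk: "s k = (1/4) *\<^sub>R (\<Sum>j=1..k. real j *\<^sub>R w j)" using Qk unfolding Q_def by auto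
    have uk: "u (Suc k) = s k + (real (Suc k) / 4) *\<^sub>R w k"
    proof (cases "k = 0")
      case True thus ?thesis using u1 w0 by simp
    next
      case False
      hence k1: "k \<ge> 1" by simp
      have "u (Suc k) = s k + (1 / (2 * real k)) *\<^sub>R v k" using u_step kT k1 by auto
      also have "v k = S k *\<^sub>R w k" using vk WS[of k] kT by simp
      also have "(1 / (2 * real k)) *\<^sub>R (S k *\<^sub>R w k) = (real (Suc k) / 4) *\<^sub>R w k"
        using k1 by (simp add: Sf field_simps)
      finally show ?thesis .
    qed
    define C where "C = - (1/4) * ((\<Sum>j=1..k. real j * (1/2 * (norm (w j))^2)) + real (Suc k) * (1/2 * (norm (w k))^2))"
    have fq: "\<forall>q. 1/4 * ((\<Sum>j=1..Suc k - 1. real j * gfun x y (w j) q) + real (Suc k) * gfun x y (w (Suc k - 1)) q)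
                      + KL q (\<chi> i. 1 / real CARD('n))
             = pAw x y q (u (Suc k)) + C + KL q (\<chi> i. 1 / real CARD('n))"
    proof
      fix q
      define a where "a = aT x y q"
      have g: "gfun x y z q = a \<bullet> z - 1/2 * (norm z)^2" for z unfolding gfun_def pAw_aT a_def by simp
      have "(\<Sum>j=1..k. real j * gfun x y (w j) q) = (\<Sum>j=1..k. a \<bullet> (real j *\<^sub>R w j) - real j * (1/2 * (norm (w j))^2))"
        by (rule sum.cong) (simp_all add: g algebra_simps)
      also have "\<dots> = a \<bullet> (\<Sum>j=1..k. real j *\<^sub>R w j) - (\<Sum>j=1..k. real j * (1/2 * (norm (w j))^2))"
        by (simp add: sum_subtractf inner_sum_right)
      finally have e: "(\<Sum>j=1..k. real j * gfun x y (w j) q) = a \<bullet> (\<Sum>j=1..k. real j *\<^sub>R w j) - (\<Sum>j=1..k. real j * (1/2 * (norm (w j))^2))" .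
      define P1 where "P1 = a \<bullet> (\<Sum>j=1..k. real j *\<^sub>R w j)"
      define P2 where "P2 = (\<Sum>j=1..k. real j * (1/2 * (norm (w j))^2))"
      define K where "K = KL q (\<chi> i. 1 / real CARD('n))"
      have pu: "pAw x y q (u (Suc k)) = 1/4 * P1 + real (Suc k) / 4 * (a \<bullet> w k)"
        unfolding pAw_aT a_def[symmetric] uk sk P1_def by (simp add: inner_add_right)
      have lhs: "1/4 * ((\<Sum>j=1..Suc k - 1. real j * gfun x y (w j) q) + real (Suc k) * gfun x y (w (Suc k - 1)) q)
                      + KL q (\<chi> i. 1 / real CARD('n))
                = 1/4 * ((P1 - P2) + real (Suc k) * (a \<bullet> w k - 1/2 * (norm (w k))^2)) + K"
        unfolding diff_Suc_1 e P1_def[symmetric] P2_def[symmetric] K_def[symmetric] unfolding g ..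
      show "1/4 * ((\<Sum>j=1..Suc k - 1. real j * gfun x y (w j) q) + real (Suc k) * gfun x y (w (Suc k - 1)) q)
                      + KL q (\<chi> i. 1 / real CARD('n))
             = pAw x y q (u (Suc k)) + C + KL q (\<chi> i. 1 / real CARD('n))"
        unfolding lhs pu unfolding K_def[symmetric] C_def P2_def[symmetric] by (simp add: field_simps)
    qed
    have pk: "p (Suc k) = piv x y (u (Suc k))"
    proof -
      have am: "is_arg_min (\<lambda>q. 1/4 * ((\<Sum>j=1..Suc k - 1. real j * gfun x y (w j) q) + real (Suc k) * gfun x y (w (Suc k - 1)) q)
                      + KL q (\<chi> i. 1 / real CARD('n))) (\<lambda>q. q \<in> prob_simplex) (p (Suc k))"
        using p_step[rule_format, of "Suc k"] kT by simp
      show ?thesis by (rule gibbs[OF am fq])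
    qed
    have vS: "v (Suc k) = V (Suc k)"
    proof -
      have "v (Suc k) = v k - (real (Suc k) / risk x y (u (Suc k))) *\<^sub>R G (Suc k)" using v_step kT by auto
      also have "\<dots> = v k + real (Suc k) *\<^sub>R aT x y (piv x y (u (Suc k)))"
        using grad_step[of x y "u (Suc k)" "G (Suc k)" "v k" "real (Suc k)"] G_grad[rule_format, of "Suc k"] kT by simp
      finally show ?thesis using vk pk VSuc by simp
    qed
    have sS: "s (Suc k) = (1/4) *\<^sub>R (\<Sum>j=1..Suc k. real j *\<^sub>R w j)"
    proof -
      have "s (Suc k) = s k + (1 / (2 * real (Suc k + 1))) *\<^sub>R v (Suc k)" using s_step kT by auto
      also have "v (Suc k) = S (Suc k) *\<^sub>R w (Suc k)" using vS WS[of "Suc k"] kT by simp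
      also have "(1 / (2 * real (Suc k + 1))) *\<^sub>R (S (Suc k) *\<^sub>R w (Suc k)) = (real (Suc k) / 4) *\<^sub>R w (Suc k)"
        by (simp add: Sf field_simps)
      finally show ?thesis using sk by (simp add: scaleR_add_right)
    qed
    show ?thesis using uk pk vS sS unfolding Q_def by simp
  qed
  have Qall: "Q k" if "k \<le> T" for k
    using that
  proof (induction k)
    case 0 thus ?case unfolding Q_def using v0 s0 V0 by simp
  next
    case (Suc k) thus ?case using step by simp
  qed
  have sT: "s T = (1/4) *\<^sub>R (\<Sum>t=1..T. real t *\<^sub>R w t)" using Qall[of T] unfolding Q_def by simp
  have part1: "s T = ((\<Sum>t=1..T. real t) / 4) *\<^sub>R (inverse (\<Sum>t=1..T. real t) *\<^sub>R (\<Sum>t=1..T. real t *\<^sub>R w t))"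
    using sT Spos[OF T_pos] unfolding S_def by simp
  have U: "u (Suc k) = s k + (real (Suc k) / 4) *\<^sub>R w k" and P: "p (Suc k) = piv x y (u (Suc k))"
    if "Suc k \<le> T" for k using step[OF that Qall[of k]] that by auto
  have sF: "s t = (1/4) *\<^sub>R (\<Sum>j=1..t. real j *\<^sub>R w j)" if "t \<le> T" for t
    using Qall[OF that] unfolding Q_def by simp
  have sStep: "s (Suc k) = s k + (real (Suc k) / 4) *\<^sub>R w (Suc k)" if "Suc k \<le> T" for k
    using sF[of k] sF[of "Suc k"] that by (simp add: scaleR_add_right)
  have inc: "real (Suc k) *\<^sub>R aT x y (p (Suc k)) = S (Suc k) *\<^sub>R w (Suc k) - S k *\<^sub>R w k"
    if "Suc k \<le> T" for k using WS[of k] WS[of "Suc k"] VSuc[of k] that by simp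
  define \<Phi> where "\<Phi> = (\<lambda>t. LL x y (s t) + S t * (norm (w t))^2 / 8 + (\<Sum>j=1..t. real j * (norm (w j))^2) / 8)"
  have \<Phi>step: "\<Phi> (Suc k) \<le> \<Phi> k + (if k = 0 then (norm (w 1))^2 / 32 else 0)" if kT: "Suc k \<le> T" for k
  proof -
    define t where "t = real (Suc k)"
    have d1: "u (Suc k) + (t / 4) *\<^sub>R (w (Suc k) - w k) = s (Suc k)"
      unfolding U[OF kT] sStep[OF kT] t_def by (simp add: algebra_simps)
    have d2: "u (Suc k) + (- (t / 4) *\<^sub>R w k) = s k"
      unfolding U[OF kT] t_def by simp
    have up: "LL x y (s (Suc k)) \<le> LL x y (u (Suc k)) - aT x y (p (Suc k)) \<bullet> ((t / 4) *\<^sub>R (w (Suc k) - w k))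
               + (norm ((t / 4) *\<^sub>R (w (Suc k) - w k)))^2 / 2"
      using LL_upper[OF x_norm y_sign, of "u (Suc k)" "(t / 4) *\<^sub>R (w (Suc k) - w k)"] d1 P[OF kT] by simp
    have lo: "LL x y (s k) \<ge> LL x y (u (Suc k)) - aT x y (p (Suc k)) \<bullet> (- (t / 4) *\<^sub>R w k)"
      using LL_lower[of x y "u (Suc k)" "- (t / 4) *\<^sub>R w k"] d2 P[OF kT] by simp
    have St: "S (Suc k) = t * (t + 1) / 2" unfolding t_def by (simp add: Sf)
    have Sp: "S k = (t - 1) * t / 2" unfolding t_def by (simp add: Sf algebra_simps)
    have inc': "t *\<^sub>R aT x y (p (Suc k)) = S (Suc k) *\<^sub>R w (Suc k) - S k *\<^sub>R w k"
      using inc[OF kT] unfolding t_def .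
    have ps: "LL x y (s (Suc k)) + S (Suc k) * (norm (w (Suc k)))^2 / 8 + t * (norm (w (Suc k)))^2 / 8
         \<le> LL x y (s k) + S k * (norm (w k))^2 / 8 + t * (2 - t) / 32 * (norm (w (Suc k) - w k))^2"
      by (rule pot_step[OF St Sp inc' up lo])
    have extra: "t * (2 - t) / 32 * (norm (w (Suc k) - w k))^2 \<le> (if k = 0 then (norm (w 1))^2 / 32 else 0)"
    proof (cases "k = 0")
      case True thus ?thesis using w0 by (simp add: t_def)
    next
      case False
      hence "t \<ge> 2" unfolding t_def by simp
      hence "t * (2 - t) \<le> 0" by (simp add: mult_nonneg_nonpos)
      hence "t * (2 - t) / 32 * (norm (w (Suc k) - w k))^2 \<le> 0"
        by (simp add: mult_nonpos_nonneg divide_nonpos_pos)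
      thus ?thesis using False by simp
    qed
    have sumS: "(\<Sum>j=1..Suc k. real j * (norm (w j))^2) = (\<Sum>j=1..k. real j * (norm (w j))^2) + t * (norm (w (Suc k)))^2"
      unfolding t_def by simp
    have e1: "\<Phi> (Suc k) = LL x y (s (Suc k)) + S (Suc k) * (norm (w (Suc k)))^2 / 8
        + ((\<Sum>j=1..k. real j * (norm (w j))^2) / 8 + t * (norm (w (Suc k)))^2 / 8)"
      unfolding \<Phi>_def sumS add_divide_distrib ..
    have e2: "\<Phi> k = LL x y (s k) + S k * (norm (w k))^2 / 8 + (\<Sum>j=1..k. real j * (norm (w j))^2) / 8"
      unfolding \<Phi>_def ..
    show ?thesis unfolding e1 e2 using ps extra by linarith
  qed
  have w1: "norm (w 1) \<le> 1"
  proof -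
    have "w 1 = aT x y (p 1)" using W[of 1] T_pos unfolding S_def V_def by simp
    thus ?thesis using aT_norm[OF psimp[of 1] x_norm y_sign] T_pos by simp
  qed
  have \<Phi>0: "\<Phi> 0 = ln ?n" unfolding \<Phi>_def using s0 S0 LL0[of x y] by simp
  have \<Phi>b: "\<Phi> t \<le> ln ?n + (norm (w 1))^2 / 32" if "t \<le> T" for t
    using that
  proof (induction t)
    case 0 thus ?case using \<Phi>0 by simp
  next
    case (Suc k)
    have "\<Phi> (Suc k) \<le> \<Phi> k + (if k = 0 then (norm (w 1))^2 / 32 else 0)" using \<Phi>step Suc.prems by blast
    thus ?case using Suc \<Phi>0 by (cases "k = 0") auto
  qed
  have w1': "(norm (w 1))^2 \<le> 1" using w1 by (simp add: abs_square_le_1)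
  have \<Phi>T: "\<Phi> T \<le> ln ?n + 1/32" using \<Phi>b[of T] w1' by simp
  have gi: "\<gamma> \<le> y i * (x i \<bullet> wstar)" for i
    unfolding gamma_def by (rule Min_le) auto
  have wg: "\<gamma> \<le> wstar \<bullet> w t" if "1 \<le> t" "t \<le> T" for t
  proof -
    have "(\<Sum>j=1..t. real j * \<gamma>) \<le> (\<Sum>j=1..t. real j * (wstar \<bullet> aT x y (p j)))"
    proof (intro sum_mono mult_left_mono)
      fix j assume j: "j \<in> {1..t}"
      have giA: "\<forall>i. \<gamma> \<le> y i * (x i \<bullet> wstar)" using gi by blast
      have "p j \<in> prob_simplex" using psimp[of j] j that by auto
      thus "\<gamma> \<le> wstar \<bullet> aT x y (p j)" using aT_wstar giA by blast
    qed auto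
    hence "S t * \<gamma> \<le> wstar \<bullet> V t" unfolding S_def V_def
      by (simp add: sum_distrib_right inner_sum_right)
    moreover have "S t * (wstar \<bullet> w t) = wstar \<bullet> V t" using W[OF that] Spos[OF that(1)] by simp
    ultimately have "S t * \<gamma> \<le> S t * (wstar \<bullet> w t)" by simp
    thus ?thesis using Spos[OF that(1)] mult_le_cancel_left_pos by blast
  qed
  have wn: "\<gamma> \<le> norm (w t)" if "1 \<le> t" "t \<le> T" for t
    using wg[OF that] norm_cauchy_schwarz[of wstar "w t"] wstar_norm by simp
  have sn: "S T * \<gamma> / 4 \<le> norm (s T)"
  proof -
    have "(\<Sum>j=1..T. real j * \<gamma>) \<le> (\<Sum>j=1..T. real j * (wstar \<bullet> w j))"
      using wg by (intro sum_mono mult_left_mono) auto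
    hence "S T * \<gamma> \<le> (\<Sum>j=1..T. real j * (wstar \<bullet> w j))" unfolding S_def by (simp add: sum_distrib_right)
    moreover have "wstar \<bullet> s T = (1/4) * (\<Sum>j=1..T. real j * (wstar \<bullet> w j))"
      unfolding sT by (simp add: inner_sum_right)
    moreover have "wstar \<bullet> s T \<le> norm (s T)"
      using norm_cauchy_schwarz[of wstar "s T"] wstar_norm by simp
    ultimately show ?thesis by simp
  qed
  define X where "X = (\<Sum>j=1..T. real j * (norm (w j))^2) / 8"
  have gs: "\<gamma> * norm (s T) \<le> S T * \<gamma>^2 / 8 + X"
  proof -
    have "norm (s T) \<le> (1/4) * (\<Sum>j=1..T. norm (real j *\<^sub>R w j))"
      unfolding sT using norm_sum[of "\<lambda>j. real j *\<^sub>R w j" "{1..T}"] by simp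
    hence "\<gamma> * norm (s T) \<le> \<gamma> * ((1/4) * (\<Sum>j=1..T. real j * norm (w j)))"
      using gamma_pos by (intro mult_left_mono) auto
    also have "\<dots> = (1/4) * (\<Sum>j=1..T. real j * (\<gamma> * norm (w j)))"
      by (simp add: sum_distrib_left algebra_simps)
    also have "\<dots> \<le> (1/4) * (\<Sum>j=1..T. real j * ((\<gamma>^2 + (norm (w j))^2) / 2))"
    proof -
      have "\<gamma> * norm (w j) \<le> (\<gamma>^2 + (norm (w j))^2) / 2" for j
        using sum_squares_bound[of \<gamma> "norm (w j)"] by (simp add: power2_eq_square algebra_simps)
      thus ?thesis by (intro mult_left_mono sum_mono) auto
    qed
    also have "\<dots> = S T * \<gamma>^2 / 8 + X"
      unfolding X_def S_def by (simp add: sum_distrib_left sum_distrib_right sum.distrib add_divide_distrib algebra_simps sum_divide_distrib)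
    finally show ?thesis .
  qed
  have wT: "\<gamma>^2 \<le> (norm (w T))^2" using wn[OF T_pos order_refl] gamma_pos by (intro power_mono) auto
  have SpT: "S T > 0" using Spos[OF T_pos] .
  have LLb: "- LL x y (s T) \<ge> \<gamma> * norm (s T) - ln ?n - 1/32"
  proof -
    have "LL x y (s T) + S T * (norm (w T))^2 / 8 + X * 1 \<le> ln ?n + 1/32" using \<Phi>T unfolding \<Phi>_def X_def by simp
    moreover have "S T * \<gamma>^2 / 8 \<le> S T * (norm (w T))^2 / 8" using wT SpT by simp
    ultimately show ?thesis using gs by simp
  qed
  define B where "B = \<gamma> * norm (s T) - ln ?n - 1/32"
  have INFb: "(INF q\<in>prob_simplex. pAw x y q (s T)) \<ge> B"
  proof (rule cINF_greatest)
    show "prob_simplex \<noteq> {}" using piv_simplex by blast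
    fix q :: "real^'n" assume qs: "q \<in> prob_simplex"
    have "- LL x y (s T) \<le> pAw x y q (s T)" by (rule pAw_ge_LL[OF qs])
    thus "B \<le> pAw x y q (s T)" using LLb unfolding B_def by linarith
  qed
  have snpos: "norm (s T) > 0" using sn SpT gamma_pos by (smt (verit) mult_pos_pos divide_pos_pos)
  have lnn: "ln ?n \<ge> 0" by simp
  have "(INF q\<in>prob_simplex. pAw x y q (s T)) / norm (s T) \<ge> B / norm (s T)"
    using INFb snpos by (simp add: divide_right_mono)
  moreover have "B / norm (s T) = \<gamma> - (ln ?n + 1/32) / norm (s T)"
    unfolding B_def using snpos by (simp add: field_simps)
  moreover have "(ln ?n + 1/32) / norm (s T) \<le> (ln ?n + 1/32) / (S T * \<gamma> / 4)"
    using sn lnn SpT gamma_pos snpos by (intro divide_left_mono mult_pos_pos) auto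
  moreover have "(ln ?n + 1/32) / (S T * \<gamma> / 4) \<le> (8 * ln ?n + 2) / (real T * (real T + 1) * \<gamma>)"
  proof -
    have "(ln ?n + 1/32) / (S T * \<gamma> / 4) = (8 * ln ?n + 1/4) / (real T * (real T + 1) * \<gamma>)"
    proof -
      define D where "D = real T * (real T + 1) * \<gamma>"
      have h: "S T * \<gamma> / 4 = D / 8" by (simp add: Sf D_def)
      have "(ln ?n + 1/32) / (S T * \<gamma> / 4) = (ln ?n + 1/32) / (D / 8)" unfolding h ..
      also have "\<dots> = (ln ?n + 1/32) * 8 / D" by (rule divide_divide_eq_right)
      also have "(ln ?n + 1/32) * 8 = 8 * ln ?n + 1/4" by simp
      finally show ?thesis unfolding D_def .
    qed
    also have "\<dots> \<le> (8 * ln ?n + 2) / (real T * (real T + 1) * \<gamma>)"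
      using T_pos gamma_pos by (intro divide_right_mono) auto
    finally show ?thesis .
  qed
  ultimately have part2: "(INF q\<in>prob_simplex. pAw x y q (s T)) / norm (s T)
           \<ge> \<gamma> - (8 * ln ?n + 2) / (real T * (real T + 1) * \<gamma>)" by linarith
  show ?thesis using part1 part2 by blast
qed


end
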